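(* For all non-negative integers $k$ and $n$, every weak embedding of $L_2(k)$ into $L_2(n)$ is a strong embedding.
   Context: $B_m$ denotes the Boolean lattice of all subsets of $\{1,\dots,m\}$ ordered by inclusion. $L_2(m)$ denotes the subposet of $B_m$ induced by the union of levels $\lfloor (m-1)/2\rfloor$ and $\lfloor (m+1)/2\rfloor$ (the $j$-th level being the $j$-element subsets). An injective map $f$ from a poset $P$ to a poset $Q$ is a weak embedding if $p\le q$ implies $f(p)\le f(q)$, and a strong embedding if $p\le q\iff f(p)\le f(q)$. *)

theory Defs
  imports Main
begin

definition boolean_lattice :: "nat \<Rightarrow> nat set set" where
  "boolean_lattice m = Pow {1..m}"

(* The j-th level of B_m (j an integer; negative levels are empty). *)
definition level :: "nat \<Rightarrow> int \<Rightarrow> nat set set" where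
  "level m j = {A \<in> boolean_lattice m. int (card A) = j}"

(* L_2(m): union of levels floor((m-1)/2) and floor((m+1)/2); int div floors. *)
definition L2 :: "nat \<Rightarrow> nat set set" where
  "L2 m = level m ((int m - 1) div 2) \<union> level m ((int m + 1) div 2)"

definition weak_embedding :: "'a set set \<Rightarrow> 'b set set \<Rightarrow> ('a set \<Rightarrow> 'b set) \<Rightarrow> bool" where
  "weak_embedding P Q f \<longleftrightarrow> f ` P \<subseteq> Q \<and> inj_on f P \<and>
     (\<forall>p\<in>P. \<forall>q\<in>P. p \<subseteq> q \<longrightarrow> f p \<subseteq> f q)"

definition strong_embedding :: "'a set set \<Rightarrow> 'b set set \<Rightarrow> ('a set \<Rightarrow> 'b set) \<Rightarrow> bool" where
  "strong_embedding P Q f \<longleftrightarrow> f ` P \<subseteq> Q \<and> inj_on f P \<and>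
     (\<forall>p\<in>P. \<forall>q\<in>P. p \<subseteq> q \<longleftrightarrow> f p \<subseteq> f q)"

end

theory Submission
  imports Defs
begin

lemma union_lemma:
  assumes "P \<subseteq> R" "P' \<subseteq> R" "P \<noteq> P'" "card P = M" "card P' = M"
    "card R = Suc M" "finite R"
  shows "R = P \<union> P'"
proof -
  have fP: "finite P" "finite P'" using assms(1,2,7) finite_subset by blast+
  have "\<not> P' \<subseteq> P"
  proof
    assume "P' \<subseteq> P"
    moreover have "card P' = card P" using assms(4,5) by simp
    ultimately have "P' = P" using card_subset_eq[OF fP(1)] by blast
    then show False using assms(3) by simp
  qed
  then have "P \<subset> P \<union> P'" by blast
  then have "card P < card (P \<union> P')" using fP by (simp add: psubset_card_mono)
  moreover have "card (P \<union> P') \<le> card R"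
    using card_mono[OF \<open>finite R\<close>, of "P \<union> P'"] assms(1,2) by blast
  ultimately have "card (P \<union> P') = card R" using assms(4,6) by linarith
  moreover have "P \<union> P' \<subseteq> R" using assms(1,2) by blast
  ultimately show ?thesis using card_subset_eq[OF \<open>finite R\<close>] by blast
qed

lemma diff_single:
  assumes "finite P" "finite Q" "card Q = M" "card (P \<union> Q) = Suc M"
  obtains a where "P - Q = {a}"
proof -
  have "P \<union> Q = Q \<union> (P - Q)" by blast
  moreover have "card (Q \<union> (P - Q)) = card Q + card (P - Q)"
    by (rule card_Un_disjoint) (use assms(1,2) in auto)
  ultimately have "card (P \<union> Q) = card Q + card (P - Q)" by simp
  then have "card (P - Q) = 1" using assms(3,4) by simp
  then show ?thesis using that card_1_singletonE by metis
qed

lemma six_cycle: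
  assumes "finite P" "finite P1" "finite P2" "card P = M" "card P1 = M" "card P2 = M"
    "card (P \<union> P1) = Suc M" "card (P \<union> P2) = Suc M" "card (P1 \<union> P2) = Suc M"
    "P \<union> P1 \<noteq> P1 \<union> P2"
  shows "(P \<union> P1) - P1 = (P \<union> P2) - P2"
proof (rule ccontr)
  assume ne: "(P \<union> P1) - P1 \<noteq> (P \<union> P2) - P2"
  obtain a where a: "P - P1 = {a}" using diff_single[OF assms(1,2,5,7)] by blast
  obtain b where b: "P - P2 = {b}" using diff_single[OF assms(1,3,6,8)] by blast
  have e: "P \<union> P1 - P1 = P - P1" "P \<union> P2 - P2 = P - P2" by blast+
  have ab: "a \<noteq> b"
  proof
    assume "a = b"
    then have "P \<union> P1 - P1 = P \<union> P2 - P2" using e a b by simp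
    then show False using ne by simp
  qed
  have aP: "a \<in> P" using a by blast
  have "a \<notin> P - P2" using b ab by simp
  then have aP2: "a \<in> P2" using aP by blast
  have "P \<subseteq> P1 \<union> P2"
  proof
    fix y assume y: "y \<in> P"
    show "y \<in> P1 \<union> P2"
    proof (cases "y \<in> P1")
      case False
      then have "y \<in> P - P1" using y by blast
      then have "y = a" using a by simp
      then show ?thesis using aP2 by simp
    qed simp
  qed
  then have sub: "P \<union> P1 \<subseteq> P1 \<union> P2" by blast
  have fin: "finite (P1 \<union> P2)" using assms(2,3) by blast
  have "card (P \<union> P1) = card (P1 \<union> P2)" using assms(7,9) by simp
  then have "P \<union> P1 = P1 \<union> P2" using card_subset_eq[OF fin sub] by blast
  then show False using assms(10) by simp
qed

lemma core:
  fixes f :: "nat set \<Rightarrow> nat set" and k m M :: nat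
  assumes Lk: "L = {A. A \<subseteq> {1..k} \<and> (card A = m \<or> card A = Suc m)}"
  assumes km: "m < k"
  assumes target: "\<forall>p\<in>L. finite (f p) \<and> (card (f p) = M \<or> card (f p) = Suc M)"
  assumes inj: "inj_on f L" and mono: "\<forall>p\<in>L. \<forall>q\<in>L. p \<subseteq> q \<longrightarrow> f p \<subseteq> f q"
  shows "\<forall>p\<in>L. \<forall>q\<in>L. f p \<subseteq> f q \<longrightarrow> p \<subseteq> q"
proof -
  define lower where "lower p \<longleftrightarrow> p \<subseteq> {1..k} \<and> card p = m" for p :: "nat set"
  define upper where "upper p \<longleftrightarrow> p \<subseteq> {1..k} \<and> card p = Suc m" for p :: "nat set"
  have inL: "p \<in> L \<longleftrightarrow> lower p \<or> upper p" for p unfolding Lk lower_def upper_def by blast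
  have fin: "finite p" if "p \<subseteq> {1..k}" for p
    by (rule finite_subset[OF that finite_atLeastAtMost])
  have cins: "card (insert c p) = Suc (card p)" if "p \<subseteq> {1..k}" "c \<notin> p" for p c
    using fin[OF that(1)] that(2) by simp
  have cdel: "card (p - {v}) = card p - 1" if "p \<subseteq> {1..k}" "v \<in> p" for p v
    using fin[OF that(1)] that(2) by simp
  have finl: "finite p" if "lower p \<or> upper p" for p
    using that fin unfolding lower_def upper_def by blast
  have ff: "finite (f p)" if "lower p \<or> upper p" for p using target inL that by blast
  have F1: "card (f p) = M" if lp: "lower p" for p
  proof -
    have "card ({1..k} - p) = k - m" using lp card_Diff_subset[of p "{1..k}"] finite_subset[of p "{1..k}"]
      unfolding lower_def by auto
    then have "card ({1..k} - p) > 0" using km by simp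
    then have "{1..k} - p \<noteq> {}" using card_gt_0_iff by blast
    then obtain c where c: "c \<in> {1..k}" "c \<notin> p" by blast
    have ur: "upper (insert c p)" using lp c cins unfolding lower_def upper_def by auto
    have "f p \<subseteq> f (insert c p)" using mono inL lp ur by blast
    moreover have "f p \<noteq> f (insert c p)"
    proof
      assume "f p = f (insert c p)"
      then have "p = insert c p" using inj_onD[OF inj] inL lp ur by blast
      then show False using c by blast
    qed
    ultimately have "card (f p) < card (f (insert c p))"
      using ff ur by (simp add: psubset_card_mono)
    moreover have "card (f p) = M \<or> card (f p) = Suc M" "card (f (insert c p)) = M \<or> card (f (insert c p)) = Suc M"
      using target inL lp ur by blast+
    ultimately show ?thesis by linarith
  qed
  have F2: "card (f q) = Suc M" if uq: "upper q" for q
  proof -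
    have "q \<noteq> {}" using uq unfolding upper_def by auto
    then obtain v where v: "v \<in> q" by blast
    have lr: "lower (q - {v})" using uq v cdel unfolding lower_def upper_def by auto
    have "f (q - {v}) \<subseteq> f q" using mono inL lr uq by blast
    moreover have "f (q - {v}) \<noteq> f q"
    proof
      assume "f (q - {v}) = f q"
      then have "q - {v} = q" using inj_onD[OF inj] inL lr uq by blast
      then show False using v by blast
    qed
    ultimately have "card (f (q - {v})) < card (f q)"
      using ff uq by (simp add: psubset_card_mono)
    moreover have "card (f q) = M \<or> card (f q) = Suc M" "card (f (q - {v})) = M \<or> card (f (q - {v})) = Suc M"
      using target inL lr uq by blast+
    ultimately show ?thesis by linarith
  qed
  have F3: "f r = f p \<union> f p'" if "upper r" "lower p" "lower p'" "p \<subseteq> r" "p' \<subseteq> r" "p \<noteq> p'"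
    for r p p'
  proof (rule union_lemma[where M=M])
    show "f p \<subseteq> f r" "f p' \<subseteq> f r" using mono inL that by blast+
    show "f p \<noteq> f p'" using inj_onD[OF inj] inL that by blast
    show "card (f p) = M" "card (f p') = M" using F1 that by blast+
    show "card (f r) = Suc M" using F2 that by blast
    show "finite (f r)" using ff that by blast
  qed
  define D where "D r x = f r - f (r - {x})" for r x
  have F4: "D (insert a p) x = D (insert b p) x"
    if lp: "lower p" and a: "a \<in> {1..k}" "a \<notin> p" and b: "b \<in> {1..k}" "b \<notin> p"
      and ab: "a \<noteq> b" and x: "x \<in> p" for p a b x
  proof -
    have fp: "finite p" using lp finl by blast
    have m1: "m \<ge> 1" using lp x fp unfolding lower_def
      by (metis One_nat_def Suc_leI card_gt_0_iff empty_iff)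
    have cpx: "card (p - {x}) = m - 1" using lp x fp unfolding lower_def by simp
    define p1 where "p1 = insert a (p - {x})"
    define p2 where "p2 = insert b (p - {x})"
    define s where "s = insert a (insert b (p - {x}))"
    have xa: "x \<noteq> a" "x \<noteq> b" using a b x by auto
    have l1: "lower p1" using lp a cpx m1 fp unfolding lower_def p1_def by auto
    have l2: "lower p2" using lp b cpx m1 fp unfolding lower_def p2_def by auto
    have us: "upper s" using lp a b ab cpx m1 fp unfolding upper_def lower_def s_def by auto
    have u1: "upper (insert a p)" using lp a fp unfolding lower_def upper_def by auto
    have u2: "upper (insert b p)" using lp b fp unfolding lower_def upper_def by auto
    have R1: "f (insert a p) = f p \<union> f p1"
      by (rule F3) (use u1 lp l1 x xa in \<open>auto simp: p1_def\<close>)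
    have R2: "f (insert b p) = f p \<union> f p2"
      by (rule F3) (use u2 lp l2 x xa in \<open>auto simp: p2_def\<close>)
    have S: "f s = f p1 \<union> f p2"
      by (rule F3) (use us l1 l2 a b ab in \<open>auto simp: p1_def p2_def s_def\<close>)
    have ne: "insert a p \<noteq> s" using x xa unfolding s_def by auto
    have "f (insert a p) \<noteq> f s" using inj_onD[OF inj] inL u1 us ne by blast
    have e1: "insert a p - {x} = p1" using xa unfolding p1_def by auto
    have e2: "insert b p - {x} = p2" using xa unfolding p2_def by auto
    have "(f p \<union> f p1) - f p1 = (f p \<union> f p2) - f p2"
    proof (rule six_cycle[where M=M])
      show "card (f p \<union> f p1) = Suc M" using R1 F2[OF u1] by metis
      show "card (f p \<union> f p2) = Suc M" using R2 F2[OF u2] by metis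
      show "card (f p1 \<union> f p2) = Suc M" using S F2[OF us] by metis
      show "f p \<union> f p1 \<noteq> f p1 \<union> f p2" using R1 S \<open>f (insert a p) \<noteq> f s\<close> by simp
    qed (use F1 ff lp l1 l2 in auto)
    then show ?thesis unfolding D_def using e1 e2 R1 R2 by simp
  qed
  have F5: "\<forall>r. upper r \<longrightarrow> x \<in> r \<longrightarrow> card (r - r') = N \<longrightarrow> D r x = D r' x"
    if ur': "upper r'" and xr': "x \<in> r'" for r' x N
  proof (induction N)
    case 0
    show ?case
    proof (intro allI impI)
      fix r assume ur: "upper r" and "x \<in> r" and c: "card (r - r') = 0"
      have "r - r' = {}" using c finl ur by simp
      then have "r \<subseteq> r'" by blast
      then have "r = r'" using card_subset_eq finl ur ur' unfolding upper_def by metis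
      then show "D r x = D r' x" by simp
    qed
  next
    case (Suc N)
    show ?case
    proof (intro allI impI)
      fix r assume ur: "upper r" and xr: "x \<in> r" and c: "card (r - r') = Suc N"
      have fr: "finite r" "finite r'" using finl ur ur' by auto
      have "r - r' \<noteq> {}" using c by (metis card.empty nat.distinct(1))
      then obtain a where a: "a \<in> r" "a \<notin> r'" by blast
      have "\<not> r' \<subseteq> r"
      proof
        assume "r' \<subseteq> r"
        then have "r' = r" using card_subset_eq fr ur ur' unfolding upper_def by metis
        then show False using a by simp
      qed
      then obtain b where b: "b \<in> r'" "b \<notin> r" by blast
      define p where "p = r - {a}"
      have lp: "lower p" using ur a fr unfolding p_def upper_def lower_def by auto
      have ra: "r = insert a p" using a unfolding p_def by auto
      have ak: "a \<in> {1..k}" using ur a unfolding upper_def by auto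
      have bk: "b \<in> {1..k}" using ur' b unfolding upper_def by auto
      have xp: "x \<in> p" using xr a xr' unfolding p_def by auto
      have "D r x = D (insert b p) x"
        unfolding ra by (rule F4) (use lp ak bk a b xp in \<open>auto simp: p_def\<close>)
      also have "D (insert b p) x = D r' x"
      proof -
        have u2: "upper (insert b p)" using lp bk b fr
          unfolding lower_def upper_def p_def by auto
        have "insert b p - r' = (r - r') - {a}" using b a unfolding p_def by auto
        then have "card (insert b p - r') = N" using c a fr by simp
        then show ?thesis using Suc.IH u2 xp by blast
      qed
      finally show "D r x = D r' x" .
    qed
  qed
  show ?thesis
  proof (intro ballI impI)
    fix p q assume pL: "p \<in> L" and qL: "q \<in> L" and sub: "f p \<subseteq> f q"
    have lu: "lower p \<or> upper p" "lower q \<or> upper q" using pL qL inL by auto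
    have ffp: "finite (f p)" "finite (f q)" using ff lu by blast+
    have same: "p \<subseteq> q" if "card (f p) = card (f q)"
    proof -
      have "f p = f q" using card_subset_eq[OF ffp(2) sub] that by simp
      then show ?thesis using inj_onD[OF inj] pL qL by blast
    qed
    show "p \<subseteq> q"
    proof (cases "lower p")
      case lp: True
      show ?thesis
      proof (cases "lower q")
        case True then show ?thesis using same F1[OF lp] F1[OF True] by simp
      next
        case False
        then have uq: "upper q" using lu by blast
        show ?thesis
        proof (rule ccontr)
          assume "\<not> p \<subseteq> q"
          then obtain x where x: "x \<in> p" "x \<notin> q" by blast
          have fp: "finite p" using lp finl by blast
          have "card ({1..k} - p) = k - m" using lp card_Diff_subset[of p "{1..k}"] finite_subset[of p "{1..k}"]
            unfolding lower_def by auto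
          then have "card ({1..k} - p) > 0" using km by simp
    then have "{1..k} - p \<noteq> {}" using card_gt_0_iff by blast
          then obtain c where c: "c \<in> {1..k}" "c \<notin> p" by blast
          define r where "r = insert c p"
          have ur: "upper r" using lp c fp unfolding lower_def upper_def r_def by auto
          have xc: "x \<noteq> c" using x c by auto
          have lrx: "lower (r - {x})" using ur x(1) cdel[of r x] unfolding r_def upper_def lower_def by auto
          have "f (r - {x}) \<noteq> f r"
          proof
            assume "f (r - {x}) = f r"
            then have "r - {x} = r" using inj_onD[OF inj] inL lrx ur by blast
            then show False using x unfolding r_def by blast
          qed
          moreover have "f (r - {x}) \<subseteq> f r" using mono inL lrx ur by blast
          ultimately obtain \<delta> where d: "\<delta> \<in> D r x" unfolding D_def by blast
          have pr: "p \<subseteq> r" unfolding r_def by blast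
          have npx: "p \<noteq> r - {x}" using x(1) by blast
          have "f r = f p \<union> f (r - {x})"
            by (rule F3[OF ur lp lrx pr _ npx]) blast
          then have "\<delta> \<in> f p" using d unfolding D_def by blast
          then have dq: "\<delta> \<in> f q" using sub by blast
          have fq: "finite q" using uq finl by blast
          have "card q \<ge> 2"
          proof -
            have "card p \<ge> 1" using x fp by (metis One_nat_def Suc_leI card_gt_0_iff empty_iff)
            then show ?thesis using lp uq unfolding lower_def upper_def by simp
          qed
          then have "q \<noteq> {}" by auto
          then obtain v1 where v1: "v1 \<in> q" by blast
          have "card (q - {v1}) \<ge> 1" using \<open>card q \<ge> 2\<close> v1 fq by simp
          then have "card (q - {v1}) > 0" by linarith
          then have "q - {v1} \<noteq> {}" using card_gt_0_iff by blast
          then obtain v2 where "v2 \<in> q - {v1}" by blast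
          then have v: "v1 \<in> q" "v2 \<in> q" "v1 \<noteq> v2" using v1 by auto
          have notin: "\<delta> \<notin> f (q - {v})" if vq: "v \<in> q" for v
          proof -
            define qi where "qi = insert x (q - {v})"
            have xk: "x \<in> {1..k}" using lp x unfolding lower_def by auto
            have qs: "q - {v} \<subseteq> {1..k}" using uq unfolding upper_def by blast
            have xn: "x \<notin> q - {v}" using x(2) by blast
            have "card qi = Suc (card (q - {v}))" unfolding qi_def by (rule cins[OF qs xn])
            moreover have "card (q - {v}) = card q - 1" by (rule cdel) (use uq vq in \<open>auto simp: upper_def\<close>)
            ultimately have "card qi = Suc m" using uq unfolding upper_def by simp
            moreover have "qi \<subseteq> {1..k}" using qs xk unfolding qi_def by blast
            ultimately have uqi: "upper qi" unfolding upper_def by blast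
            have xqi: "x \<in> qi" unfolding qi_def by blast
            have xr: "x \<in> r" using x(1) unfolding r_def by blast
            have "D r x = D qi x" using F5[OF uqi xqi, of "card (r - qi)"] ur xr by blast
            then have "\<delta> \<in> D qi x" using d by simp
            then have "\<delta> \<notin> f (qi - {x})" unfolding D_def by simp
            moreover have "qi - {x} = q - {v}" using xn unfolding qi_def by blast
            ultimately show ?thesis by simp
          qed
          have l1: "lower (q - {v1})" "lower (q - {v2})"
            using uq v cdel[of q v1] cdel[of q v2] unfolding upper_def lower_def by auto
          have ne12: "q - {v1} \<noteq> q - {v2}" using v by blast
          have "f q = f (q - {v1}) \<union> f (q - {v2})"
            by (rule F3[OF uq l1 _ _ ne12]) blast+
          then show False using dq notin[OF v(1)] notin[OF v(2)] by blast
        qed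
      qed
    next
      case up: False
      then have up: "upper p" using lu by blast
      show ?thesis
      proof (cases "lower q")
        case True
        have "card (f p) \<le> card (f q)" using card_mono[OF ffp(2) sub] .
        then show ?thesis using F1[OF True] F2[OF up] by simp
      next
        case False
        then have "upper q" using lu by blast
        then show ?thesis using same F2[OF up] F2[of q] by simp
      qed
    qed
  qed
qed

lemma L2_mem:
  "A \<in> L2 k \<longleftrightarrow> A \<subseteq> {1..k} \<and> (int (card A) = (int k - 1) div 2 \<or> int (card A) = (int k + 1) div 2)"
  unfolding L2_def level_def boolean_lattice_def by blast

theorem mainTheorem9:
  fixes k n :: nat and f :: "nat set \<Rightarrow> nat set"
  assumes "weak_embedding (L2 k) (L2 n) f"
  shows "strong_embedding (L2 k) (L2 n) f"
proof -
  note W = assms[unfolded weak_embedding_def]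
  note img = W[THEN conjunct1] and inj = W[THEN conjunct2, THEN conjunct1]
    and mono = W[THEN conjunct2, THEN conjunct2]
  have rev: "\<forall>p\<in>L2 k. \<forall>q\<in>L2 k. f p \<subseteq> f q \<longrightarrow> p \<subseteq> q"
  proof (cases "k = 0")
    case True
    have "p = {}" if "p \<in> L2 k" for p using that[unfolded L2_mem] True by auto
    then show ?thesis by blast
  next
    case False
    have eqv: "(int c = (int k - 1) div 2 \<or> int c = (int k + 1) div 2) =
          (c = (k-1) div 2 \<or> c = Suc ((k-1) div 2))" for c
      using False by presburger
    have Lk: "L2 k = {A. A \<subseteq> {1..k} \<and> (card A = (k-1) div 2 \<or> card A = Suc ((k-1) div 2))}"
      by (rule set_eqI) (simp only: L2_mem eqv mem_Collect_eq)
    have tgt: "\<forall>p\<in>L2 k. finite (f p) \<and> (card (f p) = (n-1) div 2 \<or> card (f p) = Suc ((n-1) div 2))"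
    proof
      fix p assume "p \<in> L2 k"
      then have fpn: "f p \<in> L2 n" using img by blast
      have cc: "int c = (int n - 1) div 2 \<or> int c = (int n + 1) div 2 \<Longrightarrow>
          c = (n-1) div 2 \<or> c = Suc ((n-1) div 2)" for c by presburger
      have s: "f p \<subseteq> {1..n}" and cd: "int (card (f p)) = (int n - 1) div 2 \<or> int (card (f p)) = (int n + 1) div 2"
        using fpn[unfolded L2_mem] by blast+
      have "finite (f p)" by (rule finite_subset[OF s finite_atLeastAtMost])
      then show "finite (f p) \<and> (card (f p) = (n-1) div 2 \<or> card (f p) = Suc ((n-1) div 2))"
        using cc[OF cd] by blast
    qed
    have km: "(k-1) div 2 < k" using False by simp
    show ?thesis
      by (rule core[OF Lk km tgt inj mono])
  qed
  have iff: "\<forall>p\<in>L2 k. \<forall>q\<in>L2 k. p \<subseteq> q \<longleftrightarrow> f p \<subseteq> f q"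
  proof (intro ballI iffI)
    fix p q assume "p \<in> L2 k" "q \<in> L2 k"
    then show "p \<subseteq> q \<Longrightarrow> f p \<subseteq> f q" "f p \<subseteq> f q \<Longrightarrow> p \<subseteq> q"
      using mono rev by simp_all
  qed
  show ?thesis unfolding strong_embedding_def using img inj iff by (intro conjI)
qed

end
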